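(* Let $k\ge1$, let $c\in\mathcal{S}_k^\alpha\setminus\{\mathbf{0}\}$, and let $s_i^k$ be the $i$-th row of $G_k^\alpha$, $i\in\{1,\dots,k\}$. Then, for every $i\in\{1,\dots,k\}$, $c$ is equal to $\gamma^{\nu(c)}s_i^k$ up to a permutation of coordinates.
   Context: Let $R$ be a finite commutative chain ring with maximal ideal $\langle\gamma\rangle$, nilpotency index $s$ and residue field $R/\langle\gamma\rangle\cong\mathbb{F}_q$. Fix coset representatives $T=\{e_0,\dots,e_{q-1}\}$ with $e_0=0,e_1=1$, ordered $e_0<\dots<e_{q-1}$; each $r\in R$ is uniquely $\sum_{i=0}^{s-1}r_i\gamma^i$, $r_i\in T$; order $R$ by $x>y$ iff $x_i>y_i$ in $T$ for the largest $i$ with $x_i\neq y_i$; list $R=\{\rho_0,\dots,\rho_{q^s-1}\}$ increasingly. $\mathbf{a}^{(m)}$ is the constant vector of length $m$. Define $G_1^\alpha=(\rho_0\ \cdots\ \rho_{q^s-1})$ and, for $k>1$, $G_k^\alpha$ as the $k\times q^{sk}$ matrix of $q^s$ column blocks, the $j$-th having first row $\boldsymbol{\rho_j}^{(q^{s(k-1)})}$ and $G_{k-1}^\alpha$ below. $\mathcal{S}_k^\alpha$ is the $R$-submodule of $R^{q^{sk}}$ generated by the rows of $G_k^\alpha$. Valuation: for $x\in R\setminus\{0\}$, $\nu(x)$ is the largest $m$ with $x=\gamma^m\beta$, $\beta$ a unit; $\nu(0)=\infty$; for $x\in R^n$, $\nu(x)=\min_i\nu(x_i)$. *)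

theory Defs
  imports Main "HOL-Library.Extended_Nat" "HOL-Library.Multiset"
begin

definition is_ideal :: "'a::comm_ring_1 set \<Rightarrow> bool" where
  "is_ideal I \<longleftrightarrow> 0 \<in> I \<and> (\<forall>x\<in>I. \<forall>y\<in>I. x + y \<in> I) \<and> (\<forall>r. \<forall>x\<in>I. r * x \<in> I)"

definition maximal_ideal :: "'a::comm_ring_1 set \<Rightarrow> bool" where
  "maximal_ideal I \<longleftrightarrow> is_ideal I \<and> I \<noteq> UNIV \<and>
     (\<forall>J. is_ideal J \<and> I \<subseteq> J \<longrightarrow> J = I \<or> J = UNIV)"

definition pideal :: "'a::comm_ring_1 \<Rightarrow> 'a set" where
  "pideal g = {g * r | r. True}"

text \<open>T = [e_0, ..., e_{q-1}] is a list of coset representatives of R/<gamma>,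
  ordered by list position, with e_0 = 0 and e_1 = 1.\<close>
definition coset_reps :: "'a::comm_ring_1 \<Rightarrow> 'a list \<Rightarrow> bool" where
  "coset_reps g T \<longleftrightarrow>
     (\<forall>i<length T. \<forall>j<length T. i \<noteq> j \<longrightarrow> T ! i - T ! j \<notin> pideal g) \<and>
     (\<forall>x. \<exists>t\<in>set T. x - t \<in> pideal g) \<and>
     T ! 0 = 0 \<and> T ! 1 = 1"

definition digits :: "'a::comm_ring_1 \<Rightarrow> nat \<Rightarrow> 'a list \<Rightarrow> 'a \<Rightarrow> 'a list" where
  "digits g s T r = (THE ds. length ds = s \<and> set ds \<subseteq> set T \<and>
                         r = (\<Sum>i<s. ds ! i * g ^ i))"

definition tidx :: "'a list \<Rightarrow> 'a \<Rightarrow> nat" where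
  "tidx T t = (THE i. i < length T \<and> T ! i = t)"

definition ring_less :: "'a::comm_ring_1 \<Rightarrow> nat \<Rightarrow> 'a list \<Rightarrow> 'a \<Rightarrow> 'a \<Rightarrow> bool" where
  "ring_less g s T x y \<longleftrightarrow>
     (let dx = digits g s T x; dy = digits g s T y in
      \<exists>i<s. dx ! i \<noteq> dy ! i \<and> tidx T (dx ! i) < tidx T (dy ! i) \<and>
            (\<forall>j. i < j \<and> j < s \<longrightarrow> dx ! j = dy ! j))"

definition rho :: "'a::comm_ring_1 \<Rightarrow> nat \<Rightarrow> 'a list \<Rightarrow> nat \<Rightarrow> 'a" where
  "rho g s T j = (THE r. card {y. ring_less g s T y r} = j)"

definition rho_list :: "'a::comm_ring_1 \<Rightarrow> nat \<Rightarrow> 'a list \<Rightarrow> 'a list" where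
  "rho_list g s T = map (rho g s T) [0..<length T ^ s]"

text \<open>Rows of G_k^alpha (row i of the paper is element i-1 of the list).\<close>
fun Gmat :: "'a::comm_ring_1 \<Rightarrow> nat \<Rightarrow> 'a list \<Rightarrow> nat \<Rightarrow> 'a list list" where
  "Gmat g s T 0 = []"
| "Gmat g s T (Suc 0) = [rho_list g s T]"
| "Gmat g s T (Suc (Suc k)) =
     concat (map (\<lambda>r. replicate (length T ^ (s * Suc k)) r) (rho_list g s T))
     # map (\<lambda>row. concat (replicate (length T ^ s) row)) (Gmat g s T (Suc k))"

definition S_mod :: "'a::comm_ring_1 \<Rightarrow> nat \<Rightarrow> 'a list \<Rightarrow> nat \<Rightarrow> 'a list set" where
  "S_mod g s T k = {map (\<lambda>p. \<Sum>i<k. a i * (Gmat g s T k ! i) ! p) [0..<length T ^ (s * k)]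
                    | a. True}"

definition val :: "'a::comm_ring_1 \<Rightarrow> 'a \<Rightarrow> enat" where
  "val g x = (if x = 0 then \<infinity> else enat (GREATEST m. \<exists>b. b dvd 1 \<and> x = g ^ m * b))"

definition vval :: "'a::comm_ring_1 \<Rightarrow> 'a list \<Rightarrow> enat" where
  "vval g c = Min (val g ` set c)"

end

theory Submission
  imports Defs
begin


locale chainR =
  fixes g :: "'a::{comm_ring_1,finite}" and s :: nat and T :: "'a list"
  assumes chain: "\<forall>I J :: 'a set. is_ideal I \<and> is_ideal J \<longrightarrow> I \<subseteq> J \<or> J \<subseteq> I"
    and maxid: "maximal_ideal (pideal g)"
    and nil: "g ^ s = 0" and nil': "g ^ (s - 1) \<noteq> 0"
    and reps: "coset_reps g T"
begin

lemma is_ideal_pideal: "is_ideal (pideal x)"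
  unfolding is_ideal_def pideal_def
proof (intro conjI ballI allI)
  show "0 \<in> {x * r |r. True}" by (auto intro: exI[of _ 0])
next
  fix a b assume "a \<in> {x * r |r. True}" "b \<in> {x * r |r. True}"
  then obtain r1 r2 where "a = x * r1" "b = x * r2" by blast
  then have "a + b = x * (r1 + r2)" by (simp add: distrib_left)
  then show "a + b \<in> {x * r |r. True}" by blast
next
  fix r a assume "a \<in> {x * r |r. True}"
  then obtain r1 where "a = x * r1" by blast
  then have "r * a = x * (r * r1)" by (simp add: mult.left_commute)
  then show "r * a \<in> {x * r |r. True}" by blast
qed

lemma in_pideal: "x * r \<in> pideal x"
  unfolding pideal_def by auto

lemma pideal_mem: "y \<in> pideal x \<longleftrightarrow> (\<exists>r. y = x * r)"
  unfolding pideal_def by auto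

lemma s_pos: "s \<ge> 1"
  using nil nil' by (cases s) auto

lemma not_pideal_unit: assumes "x \<notin> pideal g" shows "x dvd 1"
proof -
  have "pideal x \<subseteq> pideal g \<or> pideal g \<subseteq> pideal x"
    using chain is_ideal_pideal by blast
  moreover have "x \<in> pideal x" using in_pideal[of x 1] by simp
  ultimately have "pideal g \<subseteq> pideal x" using assms by blast
  then have "pideal x = pideal g \<or> pideal x = UNIV"
    using maxid is_ideal_pideal unfolding maximal_ideal_def by blast
  then have "pideal x = UNIV" using assms \<open>x \<in> pideal x\<close> by blast
  then have "1 \<in> pideal x" by simp
  then show ?thesis unfolding pideal_def by (auto simp: dvd_def)
qed

lemma unit_not_pideal: assumes "u dvd 1" shows "u \<notin> pideal g"
proof
  assume "u \<in> pideal g"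
  then obtain r where r: "u = g * r" by (auto simp: pideal_mem)
  from assms obtain w where "1 = u * w" by (auto simp: dvd_def)
  then have "1 = g * (r * w)" using r by (simp add: ac_simps)
  then have "1 \<in> pideal g" using in_pideal by metis
  then have "\<forall>x. x \<in> pideal g" using is_ideal_pideal[of g] unfolding is_ideal_def
    by (metis mult.right_neutral)
  then show False using maxid unfolding maximal_ideal_def by blast
qed

lemma unit_add_pideal: assumes "u dvd 1" "z \<in> pideal g" shows "(u + z) dvd 1"
proof (rule ccontr)
  assume "\<not> (u + z) dvd 1"
  then have "u + z \<in> pideal g" using not_pideal_unit by blast
  then obtain a b where "u + z = g * a" "z = g * b" using assms(2) by (auto simp: pideal_mem)
  then have "u = g * (a - b)" by (simp add: algebra_simps)
  then have "u \<in> pideal g" by (auto simp: pideal_mem)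
  then show False using unit_not_pideal assms(1) by blast
qed

lemma unit_mult_zero: assumes "(w::'a) dvd 1" "(a::'a) * w = 0" shows "a = 0"
proof -
  obtain w' where w': "1 = w * w'" using assms(1) by (auto simp: dvd_def)
  have "a = a * 1" by simp
  also have "\<dots> = a * (w * w')" by (rule arg_cong[where f = "\<lambda>z. a * z"]) (rule w')
  also have "\<dots> = (a * w) * w'" by (rule mult.assoc[symmetric])
  also have "\<dots> = 0" using assms(2) by simp
  finally show ?thesis .
qed

lemma pow_ne0: "m < s \<Longrightarrow> g ^ m \<noteq> 0"
proof
  assume "m < s" "g ^ m = 0"
  then have "s - 1 = m + (s - 1 - m)" by simp
  then have "g ^ (s - 1) = g ^ m * g ^ (s - 1 - m)" by (metis power_add)
  then show False using nil' \<open>g ^ m = 0\<close> by simp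
qed

lemma pow_ge0: "m \<ge> s \<Longrightarrow> g ^ m = 0"
  using nil by (metis le_add_diff_inverse mult_zero_left power_add)

lemma val_exists: assumes "x \<noteq> 0" shows "\<exists>v u. u dvd 1 \<and> x = g ^ v * u"
proof -
  define S where "S = {j. \<exists>y. x = g ^ j * y}"
  have "0 \<in> S" unfolding S_def by auto
  have Sb: "S \<subseteq> {..<s}" by (auto simp: S_def) (metis assms leI mult_zero_left pow_ge0)
  then have fin: "finite S" using finite_subset by blast
  define v where "v = Max S"
  have "v \<in> S" unfolding v_def using fin \<open>0 \<in> S\<close> Max_in by blast
  then obtain y where y: "x = g ^ v * y" unfolding S_def by auto
  have "y \<notin> pideal g"
  proof
    assume "y \<in> pideal g"
    then obtain z where "y = g * z" by (auto simp: pideal_mem)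
    then have "x = g ^ Suc v * z" using y by (simp add: ac_simps)
    then have "Suc v \<in> S" unfolding S_def by auto
    then show False using fin v_def by (meson Max_ge Suc_n_not_le_n)
  qed
  then show ?thesis using y not_pideal_unit by blast
qed

lemma val_le: assumes "x \<noteq> 0" "u dvd 1" "x = g ^ v * u" "x = g ^ j * r" shows "j \<le> v"
proof (rule ccontr)
  assume "\<not> j \<le> v"
  then have jv: "j = v + Suc (j - v - 1)" by simp
  define e where "e = j - v - 1"
  have gj: "g ^ j = g ^ v * (g * g ^ e)" using jv unfolding e_def by (metis power_add power_Suc)
  have "g ^ v * (g * (g ^ e * r)) = x" using assms(4) gj by (simp add: mult.assoc)
  then have z: "g ^ v * (u - g * (g ^ e * r)) = 0" by (simp add: right_diff_distrib assms(3))
  have "(u + g * (- (g ^ e * r))) dvd 1"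
    by (rule unit_add_pideal[OF assms(2)]) (rule in_pideal)
  then have "(u - g * (g ^ e * r)) dvd 1" by simp
  then obtain w where w: "1 = (u - g * (g ^ e * r)) * w" by (auto simp: dvd_def)
  have "g ^ v = g ^ v * ((u - g * (g ^ e * r)) * w)" using w by simp
  also have "\<dots> = 0" using z by (simp flip: mult.assoc)
  finally have "g ^ v = 0" .
  then show False using assms(1,3) by simp
qed

lemma val_eq: assumes "u dvd 1" "x = g ^ v * u" "x \<noteq> 0" shows "val g x = enat v"
proof -
  have "(GREATEST m. \<exists>b. b dvd 1 \<and> x = g ^ m * b) = v"
    by (rule Greatest_equality) (use assms val_le in blast)+
  then show ?thesis using assms(3) unfolding val_def by simp
qed

lemma ideal_classify: assumes "is_ideal I" "I \<noteq> {0}"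
  shows "\<exists>n. I = pideal (g ^ n) \<and> g ^ n \<noteq> 0"
proof -
  define P where "P v = (\<exists>x\<in>I. x \<noteq> 0 \<and> (\<exists>u. u dvd 1 \<and> x = g ^ v * u))" for v
  have "0 \<in> I" using assms(1) unfolding is_ideal_def by auto
  then obtain x0 where "x0 \<in> I" "x0 \<noteq> 0" using assms(2) by blast
  then obtain v0 u0 where vu0: "u0 dvd 1" "x0 = g ^ v0 * u0" using val_exists by blast
  then have "P v0" unfolding P_def using \<open>x0 \<in> I\<close> \<open>x0 \<noteq> 0\<close> by blast
  then have "\<exists>v. P v" by blast
  define n where "n = (LEAST v. P v)"
  have "P n" unfolding n_def using \<open>\<exists>v. P v\<close> by (rule LeastI_ex)
  then obtain x u where xu: "x \<in> I" "x \<noteq> 0" "u dvd 1" "x = g ^ n * u" unfolding P_def by blast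
  from xu(3) obtain w where w: "1 = u * w" by (auto simp: dvd_def)
  have "x * w = g ^ n * (u * w)" using xu(4) by (simp add: mult.assoc)
  then have "g ^ n = w * x" using w by (simp add: mult.commute)
  moreover have "w * x \<in> I" using assms(1) xu(1) unfolding is_ideal_def by blast
  ultimately have gn: "g ^ n \<in> I" by simp
  have "I \<subseteq> pideal (g ^ n)"
  proof
    fix y assume "y \<in> I"
    show "y \<in> pideal (g ^ n)"
    proof (cases "y = 0")
      case True then show ?thesis using in_pideal[of _ 0] by (metis mult_zero_right)
    next
      case False
      then obtain v b where vb: "b dvd 1" "y = g ^ v * b" using val_exists by blast
      then have "P v" unfolding P_def using \<open>y \<in> I\<close> False by blast
      then have "n \<le> v" unfolding n_def by (rule Least_le)
      then have "g ^ v = g ^ n * g ^ (v - n)" by (metis le_add_diff_inverse power_add)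
      then have "y = g ^ n * (g ^ (v - n) * b)" using vb by (simp add: mult.assoc)
      then show ?thesis by (auto simp: pideal_mem)
    qed
  qed
  moreover have "pideal (g ^ n) \<subseteq> I"
    using gn assms(1) unfolding is_ideal_def pideal_def by (auto simp: mult.commute)
  ultimately show ?thesis using xu by auto
qed

lemma vval_pideal: assumes "set c = pideal (g ^ n)" "g ^ n \<noteq> 0"
  shows "vval g c = enat n"
proof -
  have fin: "finite (val g ` set c)" by simp
  have "g ^ n \<in> set c" using assms(1) in_pideal[of "g^n" 1] by simp
  moreover have "val g (g ^ n) = enat n" using val_eq[of 1 "g^n" n] assms(2) by simp
  ultimately have mem: "enat n \<in> val g ` set c" by force
  have lb: "\<forall>y\<in>val g ` set c. enat n \<le> y"
  proof
    fix e assume "e \<in> val g ` set c"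
    then obtain y where y: "y \<in> set c" "e = val g y" by auto
    show "enat n \<le> e"
    proof (cases "y = 0")
      case True then show ?thesis using y unfolding val_def by simp
    next
      case False
      then obtain v b where vb: "b dvd 1" "y = g ^ v * b" using val_exists by blast
      obtain r where "y = g ^ n * r" using y(1) assms(1) by (auto simp: pideal_mem)
      then have "n \<le> v" using val_le[OF False vb] by blast
      then show ?thesis using y val_eq[OF vb False] by simp
    qed
  qed
  show ?thesis unfolding vval_def using fin mem lb by (intro Min_eqI) auto
qed

end



fun lv :: "'a::comm_ring_1 \<Rightarrow> 'a list \<Rightarrow> 'a" where
  "lv g [] = 0"
| "lv g (t # ds) = t + g * lv g ds"

lemma lv_sum: "lv g ds = (\<Sum>i<length ds. ds ! i * g ^ i)"
proof (induction ds)
  case Nil then show ?case by simp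
next
  case (Cons t ds)
  have "(\<Sum>i<length (t # ds). (t # ds) ! i * g ^ i) = (\<Sum>i<Suc (length ds). (t # ds) ! i * g ^ i)"
    by simp
  also have "\<dots> = t + (\<Sum>i<length ds. ds ! i * g ^ Suc i)"
    by (subst sum.lessThan_Suc_shift) simp
  also have "\<dots> = t + g * (\<Sum>i<length ds. ds ! i * g ^ i)"
    by (simp add: sum_distrib_left ac_simps)
  finally show ?case using Cons by simp
qed

definition lexl :: "nat \<Rightarrow> (nat \<Rightarrow> nat) \<Rightarrow> (nat \<Rightarrow> nat) \<Rightarrow> bool" where
  "lexl s f h \<longleftrightarrow> (\<exists>i<s. f i < h i \<and> (\<forall>j. i < j \<and> j < s \<longrightarrow> f j = h j))"

lemma lexl_irrefl: "\<not> lexl s f f"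
  unfolding lexl_def by auto

lemma lexl_trans: assumes "lexl s f h" "lexl s h k" shows "lexl s f k"
proof -
  obtain i where i: "i < s" "f i < h i" "\<forall>j. i < j \<and> j < s \<longrightarrow> f j = h j"
    using assms(1) unfolding lexl_def by blast
  obtain i' where i': "i' < s" "h i' < k i'" "\<forall>j. i' < j \<and> j < s \<longrightarrow> h j = k j"
    using assms(2) unfolding lexl_def by blast
  show ?thesis unfolding lexl_def
  proof (cases i i' rule: linorder_cases)
    case less then show "\<exists>i<s. f i < k i \<and> (\<forall>j. i < j \<and> j < s \<longrightarrow> f j = k j)"
      using i i' by (intro exI[of _ i']) auto
  next
    case equal then show "\<exists>i<s. f i < k i \<and> (\<forall>j. i < j \<and> j < s \<longrightarrow> f j = k j)"
      using i i' by (intro exI[of _ i']) auto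
  next
    case greater then show "\<exists>i<s. f i < k i \<and> (\<forall>j. i < j \<and> j < s \<longrightarrow> f j = k j)"
      using i i' by (intro exI[of _ i]) auto
  qed
qed

lemma lexl_total: assumes "\<exists>i<s. f i \<noteq> h i" shows "lexl s f h \<or> lexl s h f"
proof -
  define D where "D = {i. i < s \<and> f i \<noteq> h i}"
  have fin: "finite D" unfolding D_def by simp
  have ne: "D \<noteq> {}" using assms unfolding D_def by auto
  define i where "i = Max D"
  have iD: "i \<in> D" using fin ne i_def Max_in by blast
  have above: "\<forall>j. i < j \<and> j < s \<longrightarrow> f j = h j"
    using fin i_def Max_ge unfolding D_def by (metis (mono_tags, lifting) mem_Collect_eq not_le)
  from iD have "f i < h i \<or> h i < f i" unfolding D_def by auto
  then show ?thesis using iD above unfolding lexl_def D_def by auto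
qed

context chainR begin

lemma T_distinct: "distinct T"
proof -
  have "0 \<in> pideal g" using in_pideal[of g 0] by simp
  then show ?thesis using reps unfolding coset_reps_def distinct_conv_nth
    by (metis right_minus_eq)
qed

lemma T_nonempty: "length T > 0"
  using reps unfolding coset_reps_def by auto

lemma tidx: assumes "t \<in> set T" shows "tidx T t < length T \<and> T ! tidx T t = t"
proof -
  obtain i where i: "i < length T" "T ! i = t" using assms by (auto simp: in_set_conv_nth)
  have "\<exists>!i. i < length T \<and> T ! i = t"
    using i T_distinct by (metis nth_eq_iff_index_eq)
  then show ?thesis unfolding tidx_def by (rule theI')
qed

lemma tidx_inj: "t1 \<in> set T \<Longrightarrow> t2 \<in> set T \<Longrightarrow> tidx T t1 = tidx T t2 \<Longrightarrow> t1 = t2"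
  using tidx by metis

lemma rep_exists: "\<exists>t\<in>set T. \<exists>z. x = t + g * z"
proof -
  obtain t where t: "t \<in> set T" "x - t \<in> pideal g" using reps unfolding coset_reps_def by blast
  then obtain z where "x - t = g * z" by (auto simp: pideal_mem)
  then show ?thesis using t(1) by (metis add.commute diff_add_cancel)
qed

lemma rep_eq: assumes "t1 \<in> set T" "t2 \<in> set T" "t1 - t2 \<in> pideal g" shows "t1 = t2"
  using assms reps unfolding coset_reps_def in_set_conv_nth by metis

lemma lv_exists: "\<exists>ds y. length ds = n \<and> set ds \<subseteq> set T \<and> x = lv g ds + g ^ n * y"
proof (induction n arbitrary: x)
  case 0 then show ?case by (intro exI[of _ "[]"] exI[of _ x]) simp
next
  case (Suc n)
  obtain t z where tz: "t \<in> set T" "x = t + g * z" using rep_exists by blast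
  obtain ds y where dy: "length ds = n" "set ds \<subseteq> set T" "z = lv g ds + g ^ n * y"
    using Suc by blast
  show ?case
    by (intro exI[of _ "t # ds"] exI[of _ y]) (simp add: dy tz algebra_simps)
qed

lemma lv_unique:
  "length ds = n \<Longrightarrow> length es = n \<Longrightarrow> n \<le> s \<Longrightarrow> set ds \<subseteq> set T \<Longrightarrow> set es \<subseteq> set T
   \<Longrightarrow> g ^ (s - n) * (lv g ds - lv g es) = 0 \<Longrightarrow> ds = es"
proof (induction ds arbitrary: es n)
  case Nil then show ?case by simp
next
  case (Cons t ds)
  obtain t' es' where es: "es = t' # es'" using Cons.prems(1,2) by (cases es) auto
  obtain n' where n: "n = Suc n'" using Cons.prems(1) by auto
  have nn: "s - n' = Suc (s - n)" using Cons.prems(3) n by simp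
  have eq: "g ^ (s - n) * ((t - t') + g * (lv g ds - lv g es')) = 0"
    using Cons.prems(6) es by (simp add: algebra_simps)
  have tt: "t = t'"
  proof (rule ccontr)
    assume "t \<noteq> t'"
    then have "t - t' \<notin> pideal g" using rep_eq Cons.prems(4,5) es by auto
    then have "(t - t') dvd 1" by (rule not_pideal_unit)
    then have "((t - t') + g * (lv g ds - lv g es')) dvd 1"
      by (rule unit_add_pideal) (rule in_pideal)
    then have "g ^ (s - n) = 0" using eq by (rule unit_mult_zero)
    moreover have "s - n < s" using Cons.prems(3) n s_pos by simp
    ultimately show False using pow_ne0 by blast
  qed
  have "g ^ (s - n') * (lv g ds - lv g es') = 0"
    using eq tt nn by (simp add: ac_simps)
  then have "ds = es'"
    using Cons.IH[where es = es' and n = n'] Cons.prems es n by simp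
  then show ?case using es tt by simp
qed

lemma digits_unique_ex: "\<exists>!ds. length ds = s \<and> set ds \<subseteq> set T \<and> x = (\<Sum>i<s. ds ! i * g ^ i)"
proof -
  obtain ds y where dy: "length ds = s" "set ds \<subseteq> set T" "x = lv g ds + g ^ s * y"
    using lv_exists by blast
  then have "x = lv g ds" using nil by simp
  show ?thesis
  proof (rule ex1I[of _ ds])
    show "length ds = s \<and> set ds \<subseteq> set T \<and> x = (\<Sum>i<s. ds ! i * g ^ i)"
      using dy \<open>x = lv g ds\<close> lv_sum[of g ds] by simp
  next
    fix es assume es: "length es = s \<and> set es \<subseteq> set T \<and> x = (\<Sum>i<s. es ! i * g ^ i)"
    then have "lv g es = x" using lv_sum[of g es] by simp
    then show "es = ds" using lv_unique[of es s ds] es dy \<open>x = lv g ds\<close> by simp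
  qed
qed

lemma digits_prop: "length (digits g s T x) = s \<and> set (digits g s T x) \<subseteq> set T
   \<and> lv g (digits g s T x) = x"
  using theI'[OF digits_unique_ex[of x]] lv_sum[of g "digits g s T x"]
  unfolding digits_def[symmetric] by auto

lemma digits_lv: assumes "length ds = s" "set ds \<subseteq> set T" shows "digits g s T (lv g ds) = ds"
  unfolding digits_def
  by (rule the1_equality[OF digits_unique_ex]) (use assms lv_sum[of g ds] in simp)

definition F :: "'a \<Rightarrow> nat \<Rightarrow> nat" where
  "F x i = tidx T (digits g s T x ! i)"

lemma dig_in: "i < s \<Longrightarrow> digits g s T x ! i \<in> set T"
  using digits_prop[of x] by (metis nth_mem subsetD)

lemma ring_less_iff: "ring_less g s T x y \<longleftrightarrow> lexl s (F x) (F y)"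
  unfolding ring_less_def lexl_def Let_def F_def
  by (metis dig_in less_irrefl tidx_inj)

lemma F_inj: assumes "\<forall>i<s. F x i = F y i" shows "x = y"
proof -
  have "digits g s T x = digits g s T y"
    using assms digits_prop dig_in tidx_inj unfolding F_def by (metis nth_equalityI)
  then show ?thesis using digits_prop by metis
qed

lemma rl_irrefl: "\<not> ring_less g s T x x"
  using ring_less_iff lexl_irrefl by metis
lemma rl_trans: "ring_less g s T x y \<Longrightarrow> ring_less g s T y z \<Longrightarrow> ring_less g s T x z"
  using ring_less_iff lexl_trans by metis
lemma rl_total: "x \<noteq> y \<Longrightarrow> ring_less g s T x y \<or> ring_less g s T y x"
  using ring_less_iff lexl_total F_inj by metis

definition rank :: "'a \<Rightarrow> nat" where
  "rank r = card {y. ring_less g s T y r}"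

lemma rank_less: "rank x < rank y" if "ring_less g s T x y"
proof -
  have "{z. ring_less g s T z x} \<subset> {z. ring_less g s T z y}"
    using that rl_trans rl_irrefl by blast
  then show ?thesis unfolding rank_def by (simp add: psubset_card_mono)
qed

lemma rank_inj: "inj rank"
  by (rule injI) (metis rl_total rank_less less_irrefl)

lemma rank_range: "rank x < card (UNIV :: 'a set)"
proof -
  have "{z. ring_less g s T z x} \<subset> UNIV" using rl_irrefl by blast
  then show ?thesis unfolding rank_def by (simp add: psubset_card_mono)
qed

lemma rank_bij: "bij_betw rank UNIV {..<card (UNIV :: 'a set)}"
proof -
  have "rank ` UNIV \<subseteq> {..<card (UNIV :: 'a set)}" using rank_range by auto
  moreover have "card (rank ` UNIV) = card {..<card (UNIV :: 'a set)}"
    using rank_inj by (simp add: card_image)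
  ultimately have "rank ` UNIV = {..<card (UNIV :: 'a set)}"
    by (simp add: card_subset_eq)
  then show ?thesis using rank_inj by (simp add: bij_betw_def)
qed

lemma card_R: "card (UNIV :: 'a set) = length T ^ s"
proof -
  have "bij_betw (digits g s T) UNIV {ds. set ds \<subseteq> set T \<and> length ds = s}"
    by (rule bij_betw_byWitness[of _ "lv g"]) (use digits_prop digits_lv in auto)
  then have "card (UNIV :: 'a set) = card {ds. set ds \<subseteq> set T \<and> length ds = s}"
    by (rule bij_betw_same_card)
  also have "\<dots> = card (set T) ^ s" by (simp add: card_lists_length_eq)
  also have "\<dots> = length T ^ s" using T_distinct by (simp add: distinct_card)
  finally show ?thesis .
qed

lemma rho_rank: assumes "j < length T ^ s" shows "rank (rho g s T j) = j"
proof -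
  have "j \<in> {..<card (UNIV :: 'a set)}" using assms card_R by simp
  then obtain r where r: "rank r = j" using rank_bij by (metis bij_betw_imp_surj_on imageE)
  have "\<exists>!r. rank r = j" using r rank_inj by (metis injD)
  then show ?thesis unfolding rho_def rank_def[symmetric] by (rule theI')
qed

lemma rho_list_props: "distinct (rho_list g s T) \<and> set (rho_list g s T) = UNIV
   \<and> length (rho_list g s T) = length T ^ s"
proof -
  have d: "distinct (rho_list g s T)"
    unfolding rho_list_def distinct_map
    by (auto intro!: inj_onI) (metis rho_rank)
  have "set (rho_list g s T) = UNIV"
  proof -
    have "r \<in> set (rho_list g s T)" for r
    proof -
      have "rank r < length T ^ s" using rank_range card_R by simp
      moreover have "rho g s T (rank r) = r"
        using rho_rank[OF calculation] rank_inj by (metis injD)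
      ultimately show ?thesis unfolding rho_list_def by force
    qed
    then show ?thesis by auto
  qed
  then show ?thesis using d unfolding rho_list_def by simp
qed

end



lemma concat_len_uniform:
  "(\<forall>x\<in>set xs. length (f x) = M) \<Longrightarrow> length (concat (map f xs)) = length xs * M"
  by (induction xs) auto

lemma concat_nth_uniform:
  "(\<forall>x\<in>set xs. length (f x) = M) \<Longrightarrow> p < length xs * M \<Longrightarrow>
   concat (map f xs) ! p = f (xs ! (p div M)) ! (p mod M)"
proof (induction xs arbitrary: p)
  case Nil then show ?case by simp
next
  case (Cons x xs)
  have M: "M > 0" using Cons.prems(2) by (cases M) auto
  show ?case
  proof (cases "p < M")
    case True then show ?thesis using Cons.prems by (simp add: nth_append)
  next
    case False
    then have "concat (map f (x # xs)) ! p = concat (map f xs) ! (p - M)"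
      using Cons.prems by (simp add: nth_append)
    also have "\<dots> = f (xs ! ((p - M) div M)) ! ((p - M) mod M)"
      using Cons.IH Cons.prems False by simp
    also have "\<dots> = f ((x # xs) ! (p div M)) ! (p mod M)"
      using False M by (simp add: le_div_geq le_mod_geq)
    finally show ?thesis .
  qed
qed

lemma pos_of_lt_mult: "(p::nat) < a * b \<Longrightarrow> 0 < b"
  by (cases b) auto

lemma Gmat_len: "length (Gmat g s T k) = k"
  by (induction g s T k rule: Gmat.induct) auto

lemma pw: "(n::nat) ^ (s * Suc k) = n ^ s * n ^ (s * k)"
  by (simp add: power_add)

lemma Gmat_row_len: "i < k \<Longrightarrow> length (Gmat g s T k ! i) = length T ^ (s * k)"
proof (induction g s T k arbitrary: i rule: Gmat.induct)
  case (1 g s T) then show ?case by simp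
next
  case (2 g s T) then show ?case by (simp add: rho_list_def)
next
  case (3 g s T k)
  show ?case
  proof (cases i)
    case 0
    have "length (concat (map (\<lambda>r. replicate (length T ^ (s * Suc k)) r) (rho_list g s T)))
        = length (rho_list g s T) * length T ^ (s * Suc k)"
      by (rule concat_len_uniform) simp
    then show ?thesis using 0 by (simp add: rho_list_def power_add)
  next
    case (Suc j)
    then have j: "j < Suc k" using 3 by simp
    show ?thesis using Suc 3(1)[OF j] j by (simp add: Gmat_len length_concat sum_list_replicate power_add)
  qed
qed

lemma Gmat_nth0:
  assumes "p < length T ^ (s * Suc (Suc k))"
  shows "Gmat g s T (Suc (Suc k)) ! 0 ! p = rho_list g s T ! (p div length T ^ (s * Suc k))"
proof -
  let ?M = "length T ^ (s * Suc k)"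
  have "p < length (rho_list g s T) * ?M" using assms by (simp add: rho_list_def power_add)
  moreover have M: "?M > 0" using calculation by (rule pos_of_lt_mult)
  ultimately show ?thesis
    by (simp add: concat_nth_uniform[where M = ?M])
qed

lemma Gmat_nthS:
  assumes "p < length T ^ (s * Suc (Suc k))" "i < Suc k"
  shows "Gmat g s T (Suc (Suc k)) ! Suc i ! p = Gmat g s T (Suc k) ! i ! (p mod length T ^ (s * Suc k))"
proof -
  let ?M = "length T ^ (s * Suc k)"
  let ?row = "Gmat g s T (Suc k) ! i"
  have len: "length ?row = ?M" using Gmat_row_len assms(2) by blast
  have "Gmat g s T (Suc (Suc k)) ! Suc i = concat (replicate (length T ^ s) ?row)"
    using assms(2) by (simp add: Gmat_len)
  also have "\<dots> = concat (map (\<lambda>_. ?row) [0..<length T ^ s])"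
    by (simp add: map_replicate_const)
  finally have e: "Gmat g s T (Suc (Suc k)) ! Suc i = concat (map (\<lambda>_. ?row) [0..<length T ^ s])" .
  have "p < length [0..<length T ^ s] * ?M" using assms(1) by (simp add: power_add)
  then show ?thesis unfolding e using len by (simp add: concat_nth_uniform[where M = ?M])
qed

definition comb :: "'a::comm_ring_1 \<Rightarrow> nat \<Rightarrow> 'a list \<Rightarrow> (nat \<Rightarrow> 'a) \<Rightarrow> nat \<Rightarrow> 'a list" where
  "comb g s T a k = map (\<lambda>p. \<Sum>i<k. a i * (Gmat g s T k ! i) ! p) [0..<length T ^ (s * k)]"

lemma comb_Suc:
  assumes "k \<ge> 1"
  shows "comb g s T a (Suc k) =
    concat (map (\<lambda>r. map (\<lambda>v. a 0 * r + v) (comb g s T (\<lambda>i. a (Suc i)) k)) (rho_list g s T))"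
proof -
  obtain k' where k: "k = Suc k'" using assms by (cases k) auto
  let ?M = "length T ^ (s * k)"
  let ?f = "\<lambda>r. map (\<lambda>v. a 0 * r + v) (comb g s T (\<lambda>i. a (Suc i)) k)"
  have fl: "\<forall>r\<in>set (rho_list g s T). length (?f r) = ?M" by (simp add: comb_def)
  have lenR: "length (concat (map ?f (rho_list g s T))) = length T ^ s * ?M"
    using concat_len_uniform[OF fl] by (simp add: rho_list_def)
  show ?thesis
  proof (rule nth_equalityI)
    show "length (comb g s T a (Suc k)) = length (concat (map ?f (rho_list g s T)))"
      using lenR by (simp add: comb_def power_add)
  next
    fix p assume "p < length (comb g s T a (Suc k))"
    then have p: "p < length T ^ (s * Suc k)" by (simp add: comb_def)
    have "p < length T ^ s * ?M" using p by (simp add: power_add)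
    then have M: "?M > 0" by (rule pos_of_lt_mult)
    have pm: "p mod ?M < ?M" using M by simp
    have "comb g s T a (Suc k) ! p = (\<Sum>i<Suc k. a i * (Gmat g s T (Suc k) ! i) ! p)"
      using p by (simp add: comb_def)
    also have "\<dots> = a 0 * (Gmat g s T (Suc k) ! 0) ! p
        + (\<Sum>i<k. a (Suc i) * (Gmat g s T (Suc k) ! Suc i) ! p)"
      by (subst sum.lessThan_Suc_shift) simp
    also have "\<dots> = a 0 * rho_list g s T ! (p div ?M)
        + (\<Sum>i<k. a (Suc i) * (Gmat g s T k ! i) ! (p mod ?M))"
    proof -
      have p': "p < length T ^ (s * Suc (Suc k'))" using p k by simp
      have h0: "Gmat g s T (Suc k) ! 0 ! p = rho_list g s T ! (p div ?M)"
        using Gmat_nth0[OF p', of g] k by simp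
      have hS: "Gmat g s T (Suc k) ! Suc i ! p = Gmat g s T k ! i ! (p mod ?M)" if "i < k" for i
        using Gmat_nthS[OF p', of i g] k that by simp
      have "(\<Sum>i<k. a (Suc i) * (Gmat g s T (Suc k) ! Suc i) ! p)
          = (\<Sum>i<k. a (Suc i) * (Gmat g s T k ! i) ! (p mod ?M))"
        by (rule sum.cong) (simp_all add: hS)
      then show ?thesis by (simp add: h0)
    qed
    also have "\<dots> = concat (map ?f (rho_list g s T)) ! p"
    proof -
      have "p < length (rho_list g s T) * ?M" using p by (simp add: rho_list_def power_add)
      then have "concat (map ?f (rho_list g s T)) ! p = ?f (rho_list g s T ! (p div ?M)) ! (p mod ?M)"
        by (rule concat_nth_uniform[OF fl])
      then show ?thesis using pm by (simp add: comb_def)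
    qed
    finally show "comb g s T a (Suc k) ! p = concat (map ?f (rho_list g s T)) ! p" .
  qed
qed

lemma concat_single_map: "concat (map (\<lambda>r. [f r]) xs) = map f xs"
  by (induction xs) auto

lemma comb_1: "comb g s T a 1 = concat (map (\<lambda>r. map (\<lambda>v. a 0 * r + v) [0]) (rho_list g s T))"
proof -
  have "comb g s T a 1 = map (\<lambda>p. a 0 * rho_list g s T ! p) [0..<length (rho_list g s T)]"
    by (simp add: comb_def rho_list_def)
  also have "\<dots> = map (\<lambda>r. a 0 * r) (rho_list g s T)"
    by (rule nth_equalityI) auto
  finally show ?thesis by (simp add: concat_single_map)
qed

fun MS :: "(nat \<Rightarrow> 'a::{comm_ring_1,finite}) \<Rightarrow> nat \<Rightarrow> 'a multiset" where
  "MS a 0 = {#0#}"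
| "MS a (Suc k) = (\<Sum>r\<in>UNIV. image_mset (\<lambda>v. a 0 * r + v) (MS (\<lambda>i. a (Suc i)) k))"

definition J :: "(nat \<Rightarrow> 'a::comm_ring_1) \<Rightarrow> nat \<Rightarrow> 'a set" where
  "J a k = {\<Sum>i<k. a i * x i | x. True}"

definition uniform :: "'a multiset \<Rightarrow> 'a::comm_ring_1 set \<Rightarrow> bool" where
  "uniform M I \<longleftrightarrow> (\<forall>y. y \<notin> I \<longrightarrow> count M y = 0) \<and> (\<forall>y\<in>I. count M y = count M 0)"

lemma J_0: "J a 0 = {0}" unfolding J_def by simp

lemma J_Suc: "J a (Suc k) = {a 0 * r + j | r j. j \<in> J (\<lambda>i. a (Suc i)) k}"
proof -
  have A: "(\<Sum>i<Suc k. a i * x i) = a 0 * x 0 + (\<Sum>i<k. a (Suc i) * x (Suc i))" for x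
    by (subst sum.lessThan_Suc_shift) simp
  have B: "(\<Sum>i<Suc k. a i * case_nat r x i) = a 0 * r + (\<Sum>i<k. a (Suc i) * x i)" for x r
    by (subst sum.lessThan_Suc_shift) simp
  show ?thesis
  proof (intro set_eqI iffI)
    fix z assume "z \<in> J a (Suc k)"
    then obtain x where "z = (\<Sum>i<Suc k. a i * x i)" unfolding J_def by blast
    then have "z = a 0 * x 0 + (\<Sum>i<k. a (Suc i) * x (Suc i))" using A by simp
    moreover have "(\<Sum>i<k. a (Suc i) * x (Suc i)) \<in> J (\<lambda>i. a (Suc i)) k"
      unfolding J_def mem_Collect_eq by (rule exI[of _ "\<lambda>i. x (Suc i)"]) simp
    ultimately show "z \<in> {a 0 * r + j | r j. j \<in> J (\<lambda>i. a (Suc i)) k}" by blast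
  next
    fix z assume "z \<in> {a 0 * r + j | r j. j \<in> J (\<lambda>i. a (Suc i)) k}"
    then obtain r j where rj: "z = a 0 * r + j" "j \<in> J (\<lambda>i. a (Suc i)) k" by blast
    then obtain x where "j = (\<Sum>i<k. a (Suc i) * x i)" unfolding J_def by blast
    then have "z = (\<Sum>i<Suc k. a i * case_nat r x i)" using B rj by simp
    then show "z \<in> J a (Suc k)" unfolding J_def by blast
  qed
qed

lemma J_ideal: "is_ideal (J a k)"
  unfolding is_ideal_def J_def
proof (intro conjI ballI allI)
  show "0 \<in> {\<Sum>i<k. a i * x i |x. True}" by (auto intro!: exI[of _ "\<lambda>_. 0"])
next
  fix u v assume "u \<in> {\<Sum>i<k. a i * x i |x. True}" "v \<in> {\<Sum>i<k. a i * x i |x. True}"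
  then obtain x y where "u = (\<Sum>i<k. a i * x i)" "v = (\<Sum>i<k. a i * y i)" by blast
  then have "u + v = (\<Sum>i<k. a i * (x i + y i))" by (simp add: distrib_left sum.distrib)
  then show "u + v \<in> {\<Sum>i<k. a i * x i |x. True}"
    unfolding mem_Collect_eq by (intro exI[of _ "\<lambda>i. x i + y i"]) simp
next
  fix r u assume "u \<in> {\<Sum>i<k. a i * x i |x. True}"
  then obtain x where "u = (\<Sum>i<k. a i * x i)" by blast
  then have "r * u = (\<Sum>i<k. a i * (r * x i))" by (simp add: sum_distrib_left ac_simps)
  then show "r * u \<in> {\<Sum>i<k. a i * x i |x. True}"
    unfolding mem_Collect_eq by (intro exI[of _ "\<lambda>i. r * x i"]) simp
qed

lemma transl_iff: "(t + x = y) = (x = y - (t::'a::ab_group_add))"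
  by (metis add.commute eq_diff_eq)

lemma transl2: "t + (y - t) = (y::'a::ab_group_add)"
  by (metis add.commute diff_add_cancel)

lemma count_transl: "count (image_mset (\<lambda>v. t + v) M) y = count M (y - (t::'a::ab_group_add))"
  by (induction M) (simp_all add: transl_iff transl2)

lemma sum_shift_univ: "(\<Sum>r\<in>(UNIV::'a::{comm_ring_1,finite} set). h (r0 - r)) = (\<Sum>r\<in>UNIV. h r)"
  by (rule sum.reindex_bij_witness[of _ "\<lambda>r. r0 - r" "\<lambda>r. r0 - r"]) auto

lemma uniform_step:
  fixes M' :: "'a::{comm_ring_1,finite} multiset"
  assumes u: "uniform M' I" and i0: "0 \<in> I" and ia: "\<forall>x\<in>I. \<forall>y\<in>I. x + y \<in> I"
    and ineg: "\<forall>x\<in>I. - x \<in> I"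
  shows "uniform (\<Sum>r\<in>UNIV. image_mset (\<lambda>v. b * r + v) M') {b * r + j | r j. j \<in> I}"
proof -
  let ?C = "count M'"
  have cnt: "count (\<Sum>r\<in>UNIV. image_mset (\<lambda>v. b * r + v) M') y = (\<Sum>r\<in>UNIV. ?C (y - b * r))" for y
    by (simp add: count_sum count_transl)
  have shift: "?C (i + z) = ?C z" if "i \<in> I" for i z
  proof (cases "z \<in> I")
    case True then show ?thesis using u ia that unfolding uniform_def by metis
  next
    case False
    have "i + z \<notin> I"
    proof
      assume "i + z \<in> I"
      then have "- i + (i + z) \<in> I" using ia ineg that by blast
      then show False using False by simp
    qed
    then show ?thesis using u False unfolding uniform_def by metis
  qed
  have zero: "count (\<Sum>r\<in>UNIV. image_mset (\<lambda>v. b * r + v) M') 0 = (\<Sum>r\<in>UNIV. ?C (b * r))"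
    unfolding cnt using sum_shift_univ[of "\<lambda>r. ?C (b * r)" 0] by simp
  show ?thesis unfolding uniform_def
  proof (intro conjI allI impI ballI)
    fix y assume y: "y \<notin> {b * r + j | r j. j \<in> I}"
    have "?C (y - b * r) = 0" for r
    proof -
      have "y - b * r \<notin> I" using y by force
      then show ?thesis using u unfolding uniform_def by blast
    qed
    then show "count (\<Sum>r\<in>UNIV. image_mset (\<lambda>v. b * r + v) M') y = 0" unfolding cnt by simp
  next
    fix y assume "y \<in> {b * r + j | r j. j \<in> I}"
    then obtain r0 j0 where y: "y = b * r0 + j0" "j0 \<in> I" by blast
    have "(\<Sum>r\<in>UNIV. ?C (y - b * r)) = (\<Sum>r\<in>UNIV. ?C (j0 + b * (r0 - r)))"
      using y by (simp add: algebra_simps)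
    also have "\<dots> = (\<Sum>r\<in>UNIV. ?C (b * (r0 - r)))" using shift y(2) by simp
    also have "\<dots> = (\<Sum>r\<in>UNIV. ?C (b * r))" using sum_shift_univ[of "\<lambda>r. ?C (b * r)" r0] by simp
    finally have calc: "(\<Sum>r\<in>UNIV. ?C (y - b * r)) = (\<Sum>r\<in>UNIV. ?C (b * r))" .
    have "count (\<Sum>r\<in>UNIV. image_mset (\<lambda>v. b * r + v) M') y = (\<Sum>r\<in>UNIV. ?C (y - b * r))"
      by (rule cnt)
    also have "\<dots> = (\<Sum>r\<in>UNIV. ?C (b * r))" by (rule calc)
    also have "\<dots> = count (\<Sum>r\<in>UNIV. image_mset (\<lambda>v. b * r + v) M') 0" by (rule zero[symmetric])
    finally show "count (\<Sum>r\<in>UNIV. image_mset (\<lambda>v. b * r + v) M') y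
        = count (\<Sum>r\<in>UNIV. image_mset (\<lambda>v. b * r + v) M') 0" .
  qed
qed

lemma MS_uniform: "uniform (MS a k) (J a k)"
proof (induction k arbitrary: a)
  case 0 then show ?case by (simp add: uniform_def J_0)
next
  case (Suc k)
  have I: "is_ideal (J (\<lambda>i. a (Suc i)) k)" by (rule J_ideal)
  have neg: "\<forall>x\<in>J (\<lambda>i. a (Suc i)) k. - x \<in> J (\<lambda>i. a (Suc i)) k"
    using I unfolding is_ideal_def by (metis mult_minus1)
  show ?case unfolding MS.simps J_Suc
    by (rule uniform_step[OF Suc.IH]) (use I neg in \<open>auto simp: is_ideal_def\<close>)
qed

lemma size_univ: "size (M :: 'a::finite multiset) = (\<Sum>y\<in>UNIV. count M y)"
proof -
  have "size M = (\<Sum>y\<in>set_mset M. count M y)" by (rule size_multiset_overloaded_eq)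
  also have "\<dots> = (\<Sum>y\<in>UNIV. count M y)"
    by (rule sum.mono_neutral_left) (auto simp: count_eq_zero_iff)
  finally show ?thesis .
qed

lemma uniform_size: assumes "uniform (M :: 'a::{comm_ring_1,finite} multiset) I"
  shows "size M = card I * count M 0"
proof -
  have "size M = (\<Sum>y\<in>UNIV. if y \<in> I then count M 0 else 0)"
    unfolding size_univ using assms unfolding uniform_def by (intro sum.cong) auto
  also have "\<dots> = (\<Sum>y\<in>UNIV \<inter> I. count M 0)"
    using sum.inter_restrict[of UNIV "\<lambda>_. count M 0" I] by simp
  finally show ?thesis by simp
qed

lemma uniform_eq:
  fixes M1 M2 :: "'a::{comm_ring_1,finite} multiset"
  assumes "uniform M1 I" "uniform M2 I" "0 \<in> I" "size M1 = size M2"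
  shows "M1 = M2"
proof -
  have "card I > 0" using assms(3) by (auto simp: card_gt_0_iff)
  then have "count M1 0 = count M2 0" using assms uniform_size by (metis mult_left_cancel not_gr0)
  then show ?thesis using assms(1,2) unfolding uniform_def by (metis multiset_eqI)
qed

lemma uniform_set: assumes "uniform M I" "M \<noteq> {#}" shows "set_mset M = I"
proof -
  have "count M 0 \<noteq> 0"
  proof
    assume "count M 0 = 0"
    then have "\<forall>y. count M y = 0" using assms(1) unfolding uniform_def by metis
    then show False using assms(2) by (metis count_empty multiset_eqI)
  qed
  show ?thesis
  proof (intro set_eqI iffI)
    fix x assume "x \<in># M"
    then have "count M x \<noteq> 0" by (metis count_eq_zero_iff)
    show "x \<in> I"
    proof (rule ccontr)
      assume "x \<notin> I"
      then have "count M x = 0" using assms(1) unfolding uniform_def by auto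
      then show False using \<open>count M x \<noteq> 0\<close> by simp
    qed
  next
    fix x assume "x \<in> I"
    then have "count M x \<noteq> 0" using assms(1) \<open>count M 0 \<noteq> 0\<close> unfolding uniform_def by simp
    then show "x \<in># M" by (metis count_eq_zero_iff)
  qed
qed

context chainR begin

lemma mset_concat_rl:
  "mset (concat (map f (rho_list g s T))) = (\<Sum>r\<in>UNIV. mset (f r))"
proof -
  have "mset (concat (map f (rho_list g s T))) = sum_list (map (\<lambda>r. mset (f r)) (rho_list g s T))"
    by (simp add: mset_concat comp_def)
  also have "\<dots> = (\<Sum>r\<in>set (rho_list g s T). mset (f r))"
    using rho_list_props by (simp add: sum_list_distinct_conv_sum_set)
  finally show ?thesis using rho_list_props by simp
qed

lemma comb_MS: "k \<ge> 1 \<Longrightarrow> mset (comb g s T a k) = MS a k"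
proof (induction k arbitrary: a)
  case 0 then show ?case by simp
next
  case (Suc k)
  show ?case
  proof (cases "k = 0")
    case True
    have "mset (comb g s T a 1) = (\<Sum>r\<in>UNIV. mset (map (\<lambda>v. a 0 * r + v) [0]))"
      by (simp only: comb_1 mset_concat_rl)
    then show ?thesis using True by simp
  next
    case False
    then have "k \<ge> 1" by simp
    have "mset (comb g s T a (Suc k))
        = (\<Sum>r\<in>UNIV. mset (map (\<lambda>v. a 0 * r + v) (comb g s T (\<lambda>i. a (Suc i)) k)))"
      by (simp only: comb_Suc[OF \<open>k \<ge> 1\<close>] mset_concat_rl)
    also have "\<dots> = (\<Sum>r\<in>UNIV. image_mset (\<lambda>v. a 0 * r + v) (MS (\<lambda>i. a (Suc i)) k))"
      by (simp only: mset_map Suc.IH[OF \<open>k \<ge> 1\<close>])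
    finally show ?thesis by simp
  qed
qed

end



theorem proposition3p9:
  fixes g :: "'a::{comm_ring_1,finite}" and s k :: nat and T c :: "'a list"
  assumes chain: "\<forall>I J :: 'a set. is_ideal I \<and> is_ideal J \<longrightarrow> I \<subseteq> J \<or> J \<subseteq> I"
    and maxid: "maximal_ideal (pideal g)"
    and nil: "g ^ s = 0" and nil': "g ^ (s - 1) \<noteq> 0"
    and reps: "coset_reps g T"
    and k: "k \<ge> 1"
    and cS: "c \<in> S_mod g s T k"
    and cnz: "c \<noteq> replicate (length T ^ (s * k)) 0"
  shows "\<forall>i\<in>{1..k}. mset c =
           mset (map (\<lambda>x. g ^ the_enat (vval g c) * x) (Gmat g s T k ! (i - 1)))"
proof -
  interpret chainR g s T using chain maxid nil nil' reps by unfold_locales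
  obtain a where ca: "c = comb g s T a k" using cS unfolding S_mod_def comb_def by blast
  define Q where "Q = length T ^ (s * k)"
  have Qpos: "Q > 0" using T_nonempty unfolding Q_def by simp
  have lc: "length c = Q" using ca by (simp add: comb_def Q_def)
  have msc: "mset c = MS a k" using ca comb_MS k by simp
  have uc: "uniform (mset c) (J a k)" using msc MS_uniform by simp
  have "mset c \<noteq> {#}" using lc Qpos by auto
  then have "set_mset (mset c) = J a k" using uniform_set uc by blast
  then have setc: "set c = J a k" by simp
  have "J a k \<noteq> {0}"
  proof
    assume "J a k = {0}"
    then have "\<forall>y\<in>set c. y = 0" using setc by simp
    then have "replicate (length c) 0 = c" by (rule replicate_length_same)
    then show False using cnz lc Q_def by simp
  qed
  then obtain n where n: "J a k = pideal (g ^ n)" "g ^ n \<noteq> 0" using ideal_classify J_ideal by blast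
  have vv: "vval g c = enat n" using vval_pideal setc n by simp
  have z: "0 \<in> pideal (g ^ n)" using in_pideal[of "g ^ n" 0] by simp
  show ?thesis
  proof
    fix i assume i: "i \<in> {1..k}"
    define e where "e = (\<lambda>j. if j = i - 1 then g ^ n else (0::'a))"
    have il: "i - 1 < k" using i by auto
    have rowlen: "length (Gmat g s T k ! (i - 1)) = Q" using Gmat_row_len il Q_def by simp
    have sum_e: "(\<Sum>j<k. e j * x j) = g ^ n * x (i - 1)" for x :: "nat \<Rightarrow> 'a"
    proof -
      have "(\<Sum>j<k. e j * x j) = (\<Sum>j<k. if j = i - 1 then g ^ n * x j else 0)"
        by (rule sum.cong) (auto simp: e_def)
      also have "\<dots> = g ^ n * x (i - 1)" using il by (simp add: sum.delta)
      finally show ?thesis .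
    qed
    have d: "map (\<lambda>x. g ^ n * x) (Gmat g s T k ! (i - 1)) = comb g s T e k"
      unfolding comb_def Q_def[symmetric]
    proof (rule nth_equalityI)
      show "length (map (\<lambda>x. g ^ n * x) (Gmat g s T k ! (i - 1)))
          = length (map (\<lambda>p. \<Sum>j<k. e j * Gmat g s T k ! j ! p) [0..<Q])"
        using rowlen by simp
    next
      fix p assume "p < length (map (\<lambda>x. g ^ n * x) (Gmat g s T k ! (i - 1)))"
      then have p: "p < Q" using rowlen by simp
      show "map (\<lambda>x. g ^ n * x) (Gmat g s T k ! (i - 1)) ! p
          = map (\<lambda>p. \<Sum>j<k. e j * Gmat g s T k ! j ! p) [0..<Q] ! p"
        using p rowlen sum_e[of "\<lambda>j. Gmat g s T k ! j ! p"] by simp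
    qed
    have Je: "J e k = pideal (g ^ n)"
    proof (intro set_eqI iffI)
      fix z assume "z \<in> J e k"
      then obtain x where "z = (\<Sum>j<k. e j * x j)" unfolding J_def by blast
      then have "z = g ^ n * x (i - 1)" using sum_e by simp
      then show "z \<in> pideal (g ^ n)" by (simp add: in_pideal)
    next
      fix z assume "z \<in> pideal (g ^ n)"
      then obtain r where r: "z = g ^ n * r" by (auto simp: pideal_mem)
      have "\<exists>x. z = (\<Sum>j<k. e j * x j)"
      proof (rule exI[of _ "\<lambda>_. r"])
        show "z = (\<Sum>j<k. e j * (\<lambda>_. r) j)" using sum_e[of "\<lambda>_. r"] r by simp
      qed
      then show "z \<in> J e k" unfolding J_def by simp
    qed
    have ud: "uniform (mset (map (\<lambda>x. g ^ n * x) (Gmat g s T k ! (i - 1)))) (pideal (g ^ n))"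
      using d comb_MS[of k e] k MS_uniform[of e k] Je by simp
    have uc': "uniform (mset c) (pideal (g ^ n))" using uc n by simp
    have "mset c = mset (map (\<lambda>x. g ^ n * x) (Gmat g s T k ! (i - 1)))"
      by (rule uniform_eq[OF uc' ud z]) (use lc rowlen in simp)
    then show "mset c = mset (map (\<lambda>x. g ^ the_enat (vval g c) * x) (Gmat g s T k ! (i - 1)))"
      using vv by simp
  qed
qed


end
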